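(* For all integers $k\geq 5$ and $n\geq 2$, $$Q(n,k)\leq 2^{c_k(k-2)^n},\qquad\text{where } c_k=\frac{\log_2 k!}{k-2}+\frac{k}{k-4}.$$
   Context: An $n$-ary quasigroup of order $k$ is a function $f:\Sigma^n\to\Sigma$, where $\Sigma=\{0,1,\dots,k-1\}$, such that fixing any $n-1$ of its arguments to arbitrary values of $\Sigma$ yields a bijection $\Sigma\to\Sigma$ in the remaining argument. $Q(n,k)$ denotes the number of distinct $n$-ary quasigroups of order $k$ on the fixed set $\Sigma=\{0,1,\dots,k-1\}$. *)

theory Defs
  imports "HOL-Analysis.Analysis" "HOL-Library.FuncSet"
begin

text \<open>Arguments of an n-ary operation on Sigma = {0..<k}: tuples x indexed by {0..<n},
  represented extensionally (x i = undefined outside {0..<n}).\<close>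
definition tuples :: "nat \<Rightarrow> nat \<Rightarrow> (nat \<Rightarrow> nat) set" where
  "tuples n k = PiE {0..<n} (\<lambda>_. {0..<k})"

definition is_quasigroup :: "nat \<Rightarrow> nat \<Rightarrow> ((nat \<Rightarrow> nat) \<Rightarrow> nat) \<Rightarrow> bool" where
  "is_quasigroup n k f \<longleftrightarrow>
     f \<in> tuples n k \<rightarrow>\<^sub>E {0..<k} \<and>
     (\<forall>x \<in> tuples n k. \<forall>i < n. bij_betw (\<lambda>a. f (x(i := a))) {0..<k} {0..<k})"

definition Q :: "nat \<Rightarrow> nat \<Rightarrow> nat" where
  "Q n k = card {f. is_quasigroup n k f}"

end

theory Submission
  imports Defs
begin


lemma funpow_cancel:
  assumes "inj_on f P" "f ` P \<subseteq> P" "u \<in> P" "w \<in> P" "(f^^a) u = (f^^a) w"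
  shows "u = w"
  using assms(3-5)
proof (induction a arbitrary: u w)
  case 0 then show ?case by simp
next
  case (Suc a)
  have "(f^^a) (f u) = (f^^a) (f w)" using Suc.prems(3) by (simp add: funpow_Suc_right del: funpow.simps)
  then have "f u = f w" using Suc.IH Suc.prems assms(2) by blast
  then show ?case using assms(1) Suc.prems by (meson inj_onD)
qed

lemma funpow_in:
  assumes "f ` P \<subseteq> P" "x \<in> P" shows "(f^^j) x \<in> P"
  using assms by (induction j) auto

lemma funpow_period:
  assumes "finite P" "inj_on f P" "f ` P \<subseteq> P" "x \<in> P"
  shows "\<exists>m>0. (f^^m) x = x"
proof -
  have "(\<lambda>j. (f^^j) x) ` {..card P} \<subseteq> P" using funpow_in[OF assms(3,4)] by auto
  then have "\<not> inj_on (\<lambda>j. (f^^j) x) {..card P}"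
    using card_inj_on_le[of "\<lambda>j. (f^^j) x" "{..card P}" P] assms(1) by auto
  then obtain a b where ab: "a \<le> card P" "b \<le> card P" "a \<noteq> b" "(f^^a) x = (f^^b) x"
    unfolding inj_on_def by auto
  { fix a b assume "a < b" "(f^^a) x = (f^^b) x"
    then have "(f^^a) x = (f^^a) ((f^^(b-a)) x)"
      by (metis funpow_add le_add_diff_inverse less_imp_le o_apply)
    then have "x = (f^^(b-a)) x"
      using funpow_cancel[OF assms(2,3) assms(4) funpow_in[OF assms(3,4)]] by blast
    then have "\<exists>m>0. (f^^m) x = x" using \<open>a<b\<close> by (intro exI[of _ "b-a"]) auto }
  then show ?thesis using ab by (metis linorder_neqE_nat)
qed

lemma cube_lemma:
  assumes "finite J" "finite S" "S \<noteq> {}"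
    "\<forall>x\<in>S. \<forall>i\<in>J. \<exists>c. x(i:=c) \<in> S \<and> x(i:=c) \<noteq> x"
  shows "2 ^ card J \<le> card S"
  using assms
proof (induction J arbitrary: S rule: finite_induct)
  case empty
  then show ?case by (simp add: Suc_leI card_gt_0_iff)
next
  case (insert j J)
  obtain x0 where x0: "x0 \<in> S" using insert.prems by auto
  define S1 where "S1 = {x\<in>S. x j = x0 j}"
  define S2 where "S2 = {x\<in>S. x j \<noteq> x0 j}"
  have h1: "2 ^ card J \<le> card S1"
  proof (rule insert.IH)
    show "finite S1" using insert.prems unfolding S1_def by auto
    show "S1 \<noteq> {}" using x0 unfolding S1_def by auto
    show "\<forall>x\<in>S1. \<forall>i\<in>J. \<exists>c. x(i := c) \<in> S1 \<and> x(i := c) \<noteq> x"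
    proof (intro ballI)
      fix x i assume x: "x \<in> S1" and i: "i \<in> J"
      have "x \<in> S" using x unfolding S1_def by auto
      then obtain c where "x(i:=c) \<in> S" "x(i:=c) \<noteq> x" using insert.prems(3) i by blast
      moreover have "i \<noteq> j" using i insert.hyps(2) by auto
      ultimately show "\<exists>c. x(i := c) \<in> S1 \<and> x(i := c) \<noteq> x" using x unfolding S1_def by auto
    qed
  qed
  obtain c where c: "x0(j:=c) \<in> S" "x0(j:=c) \<noteq> x0" using insert.prems(3) x0 by blast
  have h2: "2 ^ card J \<le> card S2"
  proof (rule insert.IH)
    show "finite S2" using insert.prems unfolding S2_def by auto
    show "S2 \<noteq> {}" using c unfolding S2_def by (auto intro!: exI[of _ "x0(j:=c)"])
    show "\<forall>x\<in>S2. \<forall>i\<in>J. \<exists>c. x(i := c) \<in> S2 \<and> x(i := c) \<noteq> x"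
    proof (intro ballI)
      fix x i assume x: "x \<in> S2" and i: "i \<in> J"
      have "x \<in> S" using x unfolding S2_def by auto
      then obtain c where "x(i:=c) \<in> S" "x(i:=c) \<noteq> x" using insert.prems(3) i by blast
      moreover have "i \<noteq> j" using i insert.hyps(2) by auto
      ultimately show "\<exists>c. x(i := c) \<in> S2 \<and> x(i := c) \<noteq> x" using x unfolding S2_def by auto
    qed
  qed
  have "S = S1 \<union> S2" "S1 \<inter> S2 = {}" unfolding S1_def S2_def by auto
  then have "card S = card S1 + card S2" using insert.prems(1)
    by (metis card_Un_disjoint finite_Un)
  then show ?case using h1 h2 insert.hyps by simp
qed



lemma tuples_upd: "y \<in> tuples d k \<Longrightarrow> i < d \<Longrightarrow> a < k \<Longrightarrow> y(i:=a) \<in> tuples d k"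
  unfolding tuples_def by (auto simp: PiE_def extensional_def)

lemma tuples_lt: "y \<in> tuples d k \<Longrightarrow> i < d \<Longrightarrow> y i < k"
  unfolding tuples_def by (auto simp: PiE_def)

lemma finite_tuples: "finite (tuples d k)"
  unfolding tuples_def by (auto intro: finite_PiE)

lemma card_tuples: "card (tuples d k) = k ^ d"
  unfolding tuples_def by (simp add: card_PiE)

lemma qg_val: "is_quasigroup d k g \<Longrightarrow> y \<in> tuples d k \<Longrightarrow> g y < k"
  unfolding is_quasigroup_def by (metis PiE_mem atLeastLessThan_iff)

lemma qg_ext: "is_quasigroup d k g \<Longrightarrow> y \<notin> tuples d k \<Longrightarrow> g y = undefined"
  unfolding is_quasigroup_def by (metis PiE_arb)

lemma qg_bij: "is_quasigroup d k g \<Longrightarrow> y \<in> tuples d k \<Longrightarrow> i < d \<Longrightarrow>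
   bij_betw (\<lambda>a. g (y(i:=a))) {0..<k} {0..<k}"
  unfolding is_quasigroup_def by blast

lemma qg_inj_line: "is_quasigroup d k g \<Longrightarrow> y \<in> tuples d k \<Longrightarrow> i < d \<Longrightarrow> a < k \<Longrightarrow> b < k
  \<Longrightarrow> g (y(i:=a)) = g (y(i:=b)) \<Longrightarrow> a = b"
proof -
  assume a: "is_quasigroup d k g" "y \<in> tuples d k" "i < d" "a < k" "b < k" "g (y(i:=a)) = g (y(i:=b))"
  have "inj_on (\<lambda>a. g (y(i:=a))) {0..<k}" using qg_bij[OF a(1-3)] by (rule bij_betw_imp_inj_on)
  then show "a = b" using a(4-6) inj_onD[of "\<lambda>a. g (y(i:=a))" "{0..<k}" a b] by simp
qed

lemma qg_surj_line: "is_quasigroup d k g \<Longrightarrow> y \<in> tuples d k \<Longrightarrow> i < d \<Longrightarrow> v < k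
  \<Longrightarrow> \<exists>a<k. g (y(i:=a)) = v"
proof -
  assume a: "is_quasigroup d k g" "y \<in> tuples d k" "i < d" "v < k"
  have "(\<lambda>a. g (y(i:=a))) ` {0..<k} = {0..<k}" using qg_bij[OF a(1-3)] by (rule bij_betw_imp_surj_on)
  then have "v \<in> (\<lambda>a. g (y(i:=a))) ` {0..<k}" using a(4) by simp
  then show ?thesis by auto
qed

lemma qg_eqI: "is_quasigroup d k g \<Longrightarrow> is_quasigroup d k g' \<Longrightarrow> (\<And>y. y \<in> tuples d k \<Longrightarrow> g y = g' y)
  \<Longrightarrow> g = g'"
proof (rule ext)
  fix y assume a: "is_quasigroup d k g" "is_quasigroup d k g'" "\<And>y. y \<in> tuples d k \<Longrightarrow> g y = g' y"
  show "g y = g' y" by (cases "y \<in> tuples d k") (simp_all add: a(3) qg_ext[OF a(1)] qg_ext[OF a(2)])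
qed

lemma two_valued:
  fixes d k :: nat and M :: "(nat \<Rightarrow> nat) \<Rightarrow> nat set"
  assumes M2: "\<And>y. y \<in> tuples d k \<Longrightarrow> finite (M y) \<and> card (M y) \<le> 2"
  shows "real (card {g. is_quasigroup d k g \<and> (\<forall>y\<in>tuples d k. g y \<in> M y)}) \<le> 2 powr (real k ^ d / 2 ^ d)"
proof -
  define G where "G = {g. is_quasigroup d k g \<and> (\<forall>y\<in>tuples d k. g y \<in> M y)}"
  have finG: "finite G"
  proof (rule finite_subset)
    show "G \<subseteq> tuples d k \<rightarrow>\<^sub>E {0..<k}" unfolding G_def is_quasigroup_def by auto
    show "finite (tuples d k \<rightarrow>\<^sub>E {0..<k})" by (auto intro: finite_PiE finite_tuples)
  qed
  show ?thesis
  proof (cases "G = {}")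
    case True then show ?thesis unfolding G_def[symmetric] by simp
  next
    case False
    then obtain g0 where g0: "g0 \<in> G" by auto
    have qg0: "is_quasigroup d k g0" using g0 unfolding G_def by auto
    define oth where "oth y = (SOME v. v \<in> M y \<and> v \<noteq> g0 y)" for y
    have O: "g y = oth y" if h: "g \<in> G" "y \<in> tuples d k" "g y \<noteq> g0 y" for g y
    proof -
      have gy: "g y \<in> M y" "g0 y \<in> M y" using h g0 unfolding G_def by auto
      then have oy: "oth y \<in> M y" "oth y \<noteq> g0 y" unfolding oth_def
        using h(3) by (metis (mono_tags, lifting) someI)+
      show ?thesis
      proof (rule ccontr)
        assume "g y \<noteq> oth y"
        then have "card {g0 y, g y, oth y} = 3" using oy h(3) by auto
        moreover have "card {g0 y, g y, oth y} \<le> card (M y)"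
          using gy oy M2[OF h(2)] by (intro card_mono) auto
        ultimately show False using M2[OF h(2)] by auto
      qed
    qed
    define D where "D g = {y \<in> tuples d k. g y \<noteq> g0 y}" for g
    define sg where "sg i y = y(i := (SOME a. a < k \<and> g0 (y(i:=a)) = oth y))" for i y
    have S1: "sg i y \<in> tuples d k \<and> g0 (sg i y) = g y"
      if h: "g \<in> G" "y \<in> D g" "i < d" for g y i
    proof -
      have y: "y \<in> tuples d k" "g y \<noteq> g0 y" using h unfolding D_def by auto
      have "g y < k" using h y qg_val unfolding G_def by auto
      then have "\<exists>a. a < k \<and> g0 (y(i:=a)) = oth y"
        using qg_surj_line[OF qg0 y(1) h(3)] O[OF h(1) y] by auto
      then have "(SOME a. a < k \<and> g0 (y(i:=a)) = oth y) < k \<and>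
          g0 (y(i:=(SOME a. a < k \<and> g0 (y(i:=a)) = oth y))) = oth y"
        by (rule someI_ex)
      then show ?thesis unfolding sg_def using tuples_upd[OF y(1) h(3)] O[OF h(1) y] by auto
    qed
    have S2: "sg i y \<in> D g \<and> sg i y \<noteq> y"
      if h: "g \<in> G" "y \<in> D g" "i < d" for g y i
    proof -
      have y: "y \<in> tuples d k" "g y \<noteq> g0 y" using h unfolding D_def by auto
      have qg: "is_quasigroup d k g" using h unfolding G_def by auto
      note s = S1[OF h]
      have ne: "sg i y \<noteq> y" using s y by auto
      obtain a where a: "sg i y = y(i:=a)" unfolding sg_def by auto
      have ak: "a < k" using s a h(3) by (metis fun_upd_same tuples_lt)
      have yi: "y i < k" using y h(3) tuples_lt by auto
      have "a \<noteq> y i" using ne a by auto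
      then have "g (y(i:=a)) \<noteq> g (y(i:=y i))" using qg_inj_line[OF qg y(1) h(3) ak yi] by auto
      then have "g (sg i y) \<noteq> g y" using a by simp
      then show ?thesis using s ne unfolding D_def by auto
    qed
    have S3: "y = z"
      if h: "g \<in> G" "y \<in> D g" "z \<in> D g" "i < d" "z = y(i:=b)" "sg i y = sg i z" for g y z i b
    proof -
      have y: "y \<in> tuples d k" using h unfolding D_def by auto
      have z: "z \<in> tuples d k" using h unfolding D_def by auto
      have qg: "is_quasigroup d k g" using h unfolding G_def by auto
      have "g y = g z" using S1[OF h(1,2,4)] S1[OF h(1,3,4)] h(6) by simp
      then have "g (y(i:=y i)) = g (y(i:=b))" using h(5) by simp
      moreover have "b < k" using z h(4,5) tuples_lt by (metis fun_upd_same)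
      moreover have "y i < k" using y h(4) tuples_lt by auto
      ultimately have "y i = b" using qg_inj_line[OF qg y h(4)] by blast
      then show ?thesis using h(5) by (metis fun_upd_triv)
    qed
    have Siter: "(sg i ^^ j) y \<in> D g" if h: "g \<in> G" "y \<in> D g" "i < d" for g y i j
      using h(2) by (induction j) (auto simp: S2[OF h(1) _ h(3)])
    have Per: "\<exists>m>0. (sg i ^^ m) y = y" if h: "g \<in> G" "y \<in> D g" "i < d" for g y i
    proof -
      define P where "P = {z \<in> D g. \<exists>b. z = y(i:=b)}"
      have "finite P" unfolding P_def D_def using finite_tuples by auto
      moreover have "sg i ` P \<subseteq> P"
      proof
        fix w assume "w \<in> sg i ` P"
        then obtain z b where z: "z \<in> D g" "z = y(i:=b)" "w = sg i z" unfolding P_def by auto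
        then have "w \<in> D g" using S2[OF h(1) z(1) h(3)] by auto
        moreover have "\<exists>b. w = y(i:=b)" using z unfolding sg_def by auto
        ultimately show "w \<in> P" unfolding P_def by auto
      qed
      moreover have "inj_on (sg i) P"
      proof (rule inj_onI)
        fix u w assume u: "u \<in> P" and w: "w \<in> P" and e: "sg i u = sg i w"
        obtain b1 where b1: "u = y(i:=b1)" using u unfolding P_def by auto
        obtain b2 where b2: "w = y(i:=b2)" using w unfolding P_def by auto
        have "w = u(i:=b2)" using b1 b2 by simp
        then show "u = w" using S3[OF h(1) _ _ h(3) _ e] u w unfolding P_def by auto
      qed
      moreover have "y \<in> P" unfolding P_def using h(2) by (auto intro: exI[of _ "y i"])
      ultimately show ?thesis by (metis funpow_period)
    qed
    have S4: "y \<in> D g'" if h: "g \<in> G" "g' \<in> G" "y \<in> D g" "i < d" "sg i y \<in> D g'" for g g' y i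
    proof -
      obtain m1 where m1: "m1 > 0" "(sg i ^^ m1) y = y" using Per[OF h(1,3,4)] by auto
      obtain m2 where m2: "m2 > 0" "(sg i ^^ m2) (sg i y) = sg i y" using Per[OF h(2,5,4)] by auto
      have p1: "(sg i ^^ (m1 * j)) y = y" for j
        by (induction j) (simp_all add: funpow_add m1(2) del: funpow.simps(2))
      have p2: "(sg i ^^ (m2 * j)) (sg i y) = sg i y" for j
        by (induction j) (simp_all add: funpow_add m2(2) del: funpow.simps(2))
      obtain M' where M': "m1 * m2 = Suc M'" using m1 m2 by (metis gr0_implies_Suc nat_0_less_mult_iff)
      have "y = (sg i ^^ (m1*m2)) y" using p1 by simp
      also have "\<dots> = (sg i ^^ M') (sg i y)" using M' by (simp add: funpow_Suc_right del: funpow.simps)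
      finally have "y = (sg i ^^ M') (sg i y)" .
      then show ?thesis using Siter[OF h(2,5,4)] by metis
    qed
    define U where "U = {y. \<exists>g\<in>G. y \<in> D g}"
    define eqv where "eqv y z \<longleftrightarrow> (\<forall>g\<in>G. y \<in> D g \<longleftrightarrow> z \<in> D g)" for y z
    define At where "At y = {z \<in> U. eqv y z}" for y
    define AA where "AA = At ` U"
    have Utup: "U \<subseteq> tuples d k" unfolding U_def D_def by auto
    have finU: "finite U" using finite_subset[OF Utup finite_tuples] .
    have sgU: "sg i x \<in> U \<and> eqv x (sg i x) \<and> sg i x \<noteq> x" if h: "x \<in> U" "i < d" for x i
    proof -
      obtain g where g: "g \<in> G" "x \<in> D g" using h unfolding U_def by auto
      have "sg i x \<in> U" using S2[OF g h(2)] g unfolding U_def by auto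
      moreover have "eqv x (sg i x)" unfolding eqv_def
      proof
        fix g' assume g': "g' \<in> G"
        show "x \<in> D g' \<longleftrightarrow> sg i x \<in> D g'"
          using S2[OF g' _ h(2), of x] S4[OF g(1) g' g(2) h(2)] by blast
      qed
      ultimately show ?thesis using S2[OF g h(2)] by auto
    qed
    have atom_card: "2 ^ d \<le> card (At y)" if h: "y \<in> U" for y
    proof -
      have "2 ^ card {0..<d} \<le> card (At y)"
      proof (rule cube_lemma)
        show "finite (At y)" unfolding At_def using finU by auto
        show "At y \<noteq> {}" unfolding At_def eqv_def using h by auto
        show "\<forall>x\<in>At y. \<forall>i\<in>{0..<d}. \<exists>c. x(i := c) \<in> At y \<and> x(i := c) \<noteq> x"
        proof (intro ballI)
          fix x i assume x: "x \<in> At y" and i: "i \<in> {0..<d}"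
          have xU: "x \<in> U" "eqv y x" using x unfolding At_def by auto
          note h = sgU[OF xU(1), of i]
          have "sg i x \<in> At y" using h i xU unfolding At_def eqv_def by auto
          then show "\<exists>c. x(i := c) \<in> At y \<and> x(i := c) \<noteq> x" using h i unfolding sg_def by auto
        qed
      qed simp
      then show ?thesis by simp
    qed
    have disj: "pairwise disjnt AA"
    proof (rule pairwiseI)
      fix a b assume a: "a \<in> AA" and b: "b \<in> AA" and ab: "a \<noteq> b"
      obtain y1 where y1: "a = At y1" using a unfolding AA_def by auto
      obtain y2 where y2: "b = At y2" using b unfolding AA_def by auto
      show "disjnt a b"
      proof (rule ccontr)
        assume "\<not> disjnt a b"
        then obtain z where "z \<in> At y1" "z \<in> At y2" using y1 y2 unfolding disjnt_def by auto
        then have "eqv y1 z" "eqv y2 z" unfolding At_def by auto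
        then have "\<And>w. eqv y1 w \<longleftrightarrow> eqv y2 w" unfolding eqv_def by metis
        then have "At y1 = At y2" unfolding At_def by auto
        then show False using ab y1 y2 by simp
      qed
    qed
    have finAA: "finite AA" unfolding AA_def using finU by auto
    have "card (\<Union>AA) = sum card AA"
      by (rule card_Union_disjoint[OF disj]) (auto simp: AA_def At_def finU)
    moreover have "sum card AA \<ge> card AA * 2 ^ d"
      using sum_bounded_below[of AA "2^d" card] atom_card unfolding AA_def by auto
    moreover have "card (\<Union>AA) \<le> k ^ d"
    proof -
      have "\<Union>AA \<subseteq> tuples d k" using Utup unfolding AA_def At_def by auto
      then show ?thesis using card_mono[OF finite_tuples] card_tuples by metis
    qed
    ultimately have cardAA: "card AA * 2 ^ d \<le> k ^ d" by linarith
    define phi where "phi g = {a \<in> AA. a \<subseteq> D g}" for g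
    have Dphi: "D g = \<Union>(phi g)" if h: "g \<in> G" for g
    proof
      show "D g \<subseteq> \<Union>(phi g)"
      proof
        fix y assume y: "y \<in> D g"
        then have yU: "y \<in> U" using h unfolding U_def by auto
        have "At y \<subseteq> D g" using y h unfolding At_def eqv_def by auto
        moreover have "y \<in> At y" using yU unfolding At_def eqv_def by auto
        ultimately show "y \<in> \<Union>(phi g)" using yU unfolding phi_def AA_def by auto
      qed
    qed (auto simp: phi_def)
    have "inj_on phi G"
    proof (rule inj_onI)
      fix g g' assume g: "g \<in> G" and g': "g' \<in> G" and e: "phi g = phi g'"
      then have DD: "D g = D g'" using Dphi by metis
      have "is_quasigroup d k g" "is_quasigroup d k g'" using g g' unfolding G_def by auto
      then show "g = g'"
      proof (rule qg_eqI)
        fix y assume y: "y \<in> tuples d k"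
        show "g y = g' y"
        proof (cases "y \<in> D g")
          case True
          then have "y \<in> D g'" using DD by simp
          then show ?thesis using O[OF g y] O[OF g' y] True unfolding D_def by auto
        next
          case False
          then have "y \<notin> D g'" using DD by simp
          then show ?thesis using False y unfolding D_def by auto
        qed
      qed
    qed
    moreover have "phi ` G \<subseteq> Pow AA" unfolding phi_def by auto
    ultimately have "card G \<le> card (Pow AA)"
      by (intro card_inj_on_le) (simp_all add: finAA)
    then have "card G \<le> 2 ^ card AA" by (simp add: card_Pow finAA)
    then have "real (card G) \<le> real (2 ^ card AA)" by (simp only: of_nat_le_iff)
    also have "\<dots> = 2 powr (real (card AA))" by (simp add: powr_realpow)
    also have "\<dots> \<le> 2 powr (real k ^ d / 2 ^ d)"
    proof -
      have "real (card AA * 2 ^ d) \<le> real (k ^ d)" using cardAA by (simp only: of_nat_le_iff)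
      then have "real (card AA) * 2 ^ d \<le> real k ^ d" by simp
      then have "real (card AA) \<le> real k ^ d / 2 ^ d" by (simp add: field_simps)
      then show ?thesis by simp
    qed
    finally show ?thesis unfolding G_def .
  qed
qed



lemma tup_ext: "y \<in> tuples m k \<Longrightarrow> t < k \<Longrightarrow> y(m:=t) \<in> tuples (Suc m) k"
  unfolding tuples_def by (auto simp: PiE_def extensional_def)

lemma tup_split: "x \<in> tuples (Suc m) k \<Longrightarrow>
   x(m:=undefined) \<in> tuples m k \<and> x = (x(m:=undefined))(m := x m) \<and> x m < k"
  unfolding tuples_def by (auto simp: PiE_def extensional_def)

lemma retract_qg:
  assumes f: "is_quasigroup (Suc m) k f" and t: "t < k"
  shows "is_quasigroup m k (restrict (\<lambda>y. f (y(m:=t))) (tuples m k))"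
  unfolding is_quasigroup_def
proof (intro conjI ballI allI impI)
  show "restrict (\<lambda>y. f (y(m := t))) (tuples m k) \<in> tuples m k \<rightarrow>\<^sub>E {0..<k}"
    using qg_val[OF f tup_ext[OF _ t]] by auto
next
  fix x i assume x: "x \<in> tuples m k" and i: "i < m"
  have "bij_betw (\<lambda>a. f ((x(m:=t))(i:=a))) {0..<k} {0..<k}"
    using qg_bij[OF f tup_ext[OF x t]] i by auto
  moreover have "bij_betw (\<lambda>a. restrict (\<lambda>y. f (y(m := t))) (tuples m k) (x(i := a))) {0..<k} {0..<k}
     = bij_betw (\<lambda>a. f ((x(m:=t))(i:=a))) {0..<k} {0..<k}"
  proof (rule bij_betw_cong)
    fix a assume "a \<in> {0..<k}"
    then have "x(i:=a) \<in> tuples m k" using tuples_upd[OF x i, of a] by simp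
    then show "restrict (\<lambda>y. f (y(m := t))) (tuples m k) (x(i := a)) = f ((x(m:=t))(i:=a))"
      using i by (simp add: fun_upd_twist)
  qed
  ultimately show "bij_betw (\<lambda>a. restrict (\<lambda>y. f (y(m := t))) (tuples m k) (x(i := a))) {0..<k} {0..<k}"
    by simp
qed

lemma layer_inj:
  assumes f: "is_quasigroup (Suc m) k f" and y: "y \<in> tuples m k"
  shows "inj_on (\<lambda>t. f (y(m:=t))) {0..<k}"
proof (cases "k = 0")
  case True then show ?thesis by simp
next
  case False
  have x: "y(m:=0) \<in> tuples (Suc m) k" using tup_ext[OF y] False by auto
  show ?thesis
    using qg_inj_line[OF f x, of m] by (auto simp: inj_on_def)
qed

lemma recursion:
  assumes k: "k \<ge> 2"
  shows "real (Q (Suc m) k) \<le> real (Q m k) ^ (k-2) * 2 powr (real k ^ m / 2 ^ m)"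
proof -
  define r where "r f t = restrict (\<lambda>y. f (y(m:=t))) (tuples m k)" for f :: "(nat \<Rightarrow> nat) \<Rightarrow> nat" and t
  define QG where "QG = {g. is_quasigroup m k g}"
  define H where "H = {h \<in> {0..<k-2} \<rightarrow>\<^sub>E QG. \<forall>y\<in>tuples m k. inj_on (\<lambda>t. h t y) {0..<k-2}}"
  define Gh where "Gh h = {g. is_quasigroup m k g \<and> (\<forall>y\<in>tuples m k. g y \<in> {0..<k} - (\<lambda>t. h t y) ` {0..<k-2})}"
    for h :: "nat \<Rightarrow> (nat \<Rightarrow> nat) \<Rightarrow> nat"
  define E where "E f = (restrict (r f) {0..<k-2}, r f (k-2))" for f
  define QS where "QS = {f. is_quasigroup (Suc m) k f}"
  have finQG: "finite QG"
  proof (rule finite_subset)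
    show "QG \<subseteq> tuples m k \<rightarrow>\<^sub>E {0..<k}" unfolding QG_def is_quasigroup_def by auto
    show "finite (tuples m k \<rightarrow>\<^sub>E {0..<k})" by (auto intro: finite_PiE finite_tuples)
  qed
  have finH: "finite H"
    by (rule finite_subset[of H "{0..<k-2} \<rightarrow>\<^sub>E QG"]) (use finQG in \<open>auto simp: H_def intro: finite_PiE\<close>)
  have finGh: "finite (Gh h)" for h
    using finQG unfolding Gh_def QG_def by (auto intro: finite_subset)
  have img: "E ` QS \<subseteq> Sigma H Gh"
  proof
    fix p assume "p \<in> E ` QS"
    then obtain f where f: "is_quasigroup (Suc m) k f" and p: "p = E f" unfolding QS_def by auto
    have rq: "is_quasigroup m k (r f t)" if "t < k" for t
      using retract_qg[OF f that] unfolding r_def by simp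
    have "restrict (r f) {0..<k-2} \<in> H"
      unfolding H_def QG_def
    proof (intro CollectI conjI ballI)
      show "restrict (r f) {0..<k - 2} \<in> {0..<k - 2} \<rightarrow>\<^sub>E {g. is_quasigroup m k g}"
        using rq by auto
      fix y assume y: "y \<in> tuples m k"
      have "inj_on (\<lambda>t. f (y(m:=t))) {0..<k-2}"
        using layer_inj[OF f y] by (rule inj_on_subset) auto
      then show "inj_on (\<lambda>t. restrict (r f) {0..<k - 2} t y) {0..<k - 2}"
        unfolding r_def using y by (auto simp: inj_on_def)
    qed
    moreover have "r f (k-2) \<in> Gh (restrict (r f) {0..<k-2})"
      unfolding Gh_def
    proof (intro CollectI conjI ballI)
      show "is_quasigroup m k (r f (k - 2))" using rq k by auto
      fix y assume y: "y \<in> tuples m k"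
      have "r f (k-2) y < k" using qg_val[OF rq y] k by auto
      moreover have "r f (k-2) y \<noteq> restrict (r f) {0..<k-2} t y" if "t \<in> {0..<k-2}" for t
      proof -
        have t: "t < k - 2" using that by simp
        have "f (y(m:=k-2)) \<noteq> f (y(m:=t))"
        proof
          assume eq: "f (y(m:=k-2)) = f (y(m:=t))"
          have "k - 2 = t" by (rule inj_onD[OF layer_inj[OF f y] eq]) (use t k in auto)
          then show False using t by simp
        qed
        then show ?thesis unfolding r_def using y t by simp
      qed
      ultimately show "r f (k - 2) y \<in> {0..<k} - (\<lambda>t. restrict (r f) {0..<k - 2} t y) ` {0..<k - 2}"
        by (metis (no_types, lifting) DiffI atLeastLessThan_iff imageE zero_le)
    qed
    ultimately show "p \<in> Sigma H Gh" unfolding p E_def by auto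
  qed
  have inj: "inj_on E QS"
  proof (rule inj_onI)
    fix f f' assume "f \<in> QS" "f' \<in> QS" and e: "E f = E f'"
    then have f: "is_quasigroup (Suc m) k f" and f': "is_quasigroup (Suc m) k f'" unfolding QS_def by auto
    have eqr: "f (y(m:=t)) = f' (y(m:=t))" if y: "y \<in> tuples m k" and t: "t < k - 1" for y t
    proof (cases "t < k - 2")
      case True
      have "restrict (r f) {0..<k-2} t y = restrict (r f') {0..<k-2} t y" using e unfolding E_def by simp
      then show ?thesis using True y unfolding r_def by simp
    next
      case False
      then have "t = k - 2" using t by auto
      moreover have "r f (k-2) y = r f' (k-2) y" using e unfolding E_def by simp
      ultimately show ?thesis using y unfolding r_def by simp
    qed
    have eqr2: "f (y(m:=k-1)) = f' (y(m:=k-1))" if y: "y \<in> tuples m k" for y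
    proof -
      have x: "y(m:=0) \<in> tuples (Suc m) k" using tup_ext[OF y] k by auto
      have "f (y(m:=k-1)) < k" using qg_val[OF f tup_ext[OF y]] k by auto
      then obtain a where a: "a < k" "f' ((y(m:=0))(m:=a)) = f (y(m:=k-1))"
        using qg_surj_line[OF f' x, of m] by auto
      have "a = k - 1"
      proof (rule ccontr)
        assume "a \<noteq> k - 1"
        then have "a < k - 1" using a by auto
        then have "f (y(m:=a)) = f (y(m:=k-1))" using eqr[OF y] a by simp
        then have "a = k - 1" using qg_inj_line[OF f x, of m a "k-1"] a k by simp
        with \<open>a \<noteq> k - 1\<close> show False by simp
      qed
      then show ?thesis using a by simp
    qed
    show "f = f'"
    proof (rule qg_eqI[OF f f'])
      fix x assume x: "x \<in> tuples (Suc m) k"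
      note s = tup_split[OF x]
      have "f ((x(m:=undefined))(m := x m)) = f' ((x(m:=undefined))(m := x m))"
      proof (cases "x m < k - 1")
        case True then show ?thesis using eqr s by blast
      next
        case False then have "x m = k - 1" using s by auto
        then show ?thesis using eqr2 s by metis
      qed
      then show "f x = f' x" using s by metis
    qed
  qed
  have "card QS \<le> card (Sigma H Gh)"
    using card_inj_on_le[OF inj img] finH finGh by auto
  also have "\<dots> = (\<Sum>h\<in>H. card (Gh h))" using finH finGh by simp
  finally have c1: "real (card QS) \<le> (\<Sum>h\<in>H. real (card (Gh h)))"
    by (metis of_nat_le_iff of_nat_sum)
  have c2: "real (card (Gh h)) \<le> 2 powr (real k ^ m / 2 ^ m)" if h: "h \<in> H" for h
    unfolding Gh_def
  proof (rule two_valued)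
    fix y assume y: "y \<in> tuples m k"
    have inj: "inj_on (\<lambda>t. h t y) {0..<k-2}" using h y unfolding H_def by auto
    have sub: "(\<lambda>t. h t y) ` {0..<k-2} \<subseteq> {0..<k}"
    proof
      fix v assume "v \<in> (\<lambda>t. h t y) ` {0..<k-2}"
      then obtain t where "t < k - 2" "v = h t y" by auto
      moreover have "is_quasigroup m k (h t)" using h \<open>t < k-2\<close> unfolding H_def QG_def by auto
      ultimately show "v \<in> {0..<k}" using qg_val y by auto
    qed
    have "card ({0..<k} - (\<lambda>t. h t y) ` {0..<k-2}) = k - (k-2)"
      using card_Diff_subset[OF _ sub] card_image[OF inj] by simp
    then show "finite ({0..<k} - (\<lambda>t. h t y) ` {0..<k - 2}) \<and>
          card ({0..<k} - (\<lambda>t. h t y) ` {0..<k - 2}) \<le> 2" by simp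
  qed
  have cH: "card H \<le> Q m k ^ (k-2)"
  proof -
    have "card H \<le> card ({0..<k-2} \<rightarrow>\<^sub>E QG)"
      unfolding H_def by (rule card_mono) (use finQG in \<open>auto intro: finite_PiE\<close>)
    also have "\<dots> = Q m k ^ (k-2)" unfolding Q_def QG_def by (simp add: card_PiE)
    finally show ?thesis .
  qed
  have "(\<Sum>h\<in>H. real (card (Gh h))) \<le> (\<Sum>h\<in>H. 2 powr (real k ^ m / 2 ^ m))"
    using c2 by (rule sum_mono)
  also have "\<dots> = real (card H) * 2 powr (real k ^ m / 2 ^ m)" by simp
  also have "\<dots> \<le> real (Q m k) ^ (k-2) * 2 powr (real k ^ m / 2 ^ m)"
  proof (rule mult_right_mono)
    have "real (card H) \<le> real (Q m k ^ (k-2))" using cH by (simp only: of_nat_le_iff)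
    then show "real (card H) \<le> real (Q m k) ^ (k-2)" by simp
  qed simp
  finally show ?thesis using c1 unfolding Q_def QS_def by simp
qed



lemma Q1: "Q 1 k \<le> fact k"
proof -
  define e where "e a = ((\<lambda>_. undefined)(0:=a) :: nat \<Rightarrow> nat)" for a :: nat
  have e_tup: "e a \<in> tuples 1 k" if "a < k" for a
    using that unfolding e_def tuples_def by (auto simp: PiE_def extensional_def)
  have tup_e: "x = e (x 0) \<and> x 0 < k" if "x \<in> tuples 1 k" for x
    using that unfolding e_def tuples_def by (auto simp: PiE_def extensional_def)
  define pi where "pi f = (\<lambda>a. if a < k then f (e a) else a)" for f :: "(nat \<Rightarrow> nat) \<Rightarrow> nat"
  define QS where "QS = {f. is_quasigroup 1 k f}"
  have img: "pi ` QS \<subseteq> {p. p permutes {0..<k}}"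
  proof
    fix p assume "p \<in> pi ` QS"
    then obtain f where f: "is_quasigroup 1 k f" and p: "p = pi f" unfolding QS_def by auto
    show "p \<in> {p. p permutes {0..<k}}"
    proof (cases "k = 0")
      case True then show ?thesis unfolding p pi_def by (simp add: permutes_def)
    next
      case False
      have "bij_betw (\<lambda>a. f ((e 0)(0:=a))) {0..<k} {0..<k}"
        using qg_bij[OF f e_tup, of 0 0] False by auto
      moreover have "(e 0)(0:=a) = e a" for a unfolding e_def by simp
      ultimately have "bij_betw (\<lambda>a. f (e a)) {0..<k} {0..<k}" by simp
      then have "bij_betw p {0..<k} {0..<k}" unfolding p pi_def
        by (rule bij_betw_cong[THEN iffD1, rotated]) auto
      then show ?thesis by (auto intro!: bij_imp_permutes simp: p pi_def)
    qed
  qed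
  have inj: "inj_on pi QS"
  proof (rule inj_onI)
    fix f f' assume "f \<in> QS" "f' \<in> QS" and e: "pi f = pi f'"
    then have f: "is_quasigroup 1 k f" and f': "is_quasigroup 1 k f'" unfolding QS_def by auto
    show "f = f'"
    proof (rule qg_eqI[OF f f'])
      fix x assume x: "x \<in> tuples 1 k"
      have "pi f (x 0) = pi f' (x 0)" using e by simp
      then show "f x = f' x" using tup_e[OF x] unfolding pi_def by metis
    qed
  qed
  have "card QS \<le> card {p. p permutes {0..<k}}"
    using card_inj_on_le[OF inj img] finite_permutations[of "{0..<k}"] by auto
  also have "\<dots> = fact k" by (simp add: card_permutations)
  finally show ?thesis unfolding Q_def QS_def .
qed

theorem theorem1:
  fixes n k :: nat
  assumes "k \<ge> 5" and "n \<ge> 2"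
  shows "real (Q n k) \<le>
    2 powr ((log 2 (real (fact k)) / (real k - 2) + real k / (real k - 4)) * (real k - 2) ^ n)"
proof -
  define L where "L = log 2 (real (fact k))"
  define c where "c = real k / (real k - 4)"
  have k4: "real k - 4 > 0" using assms(1) by simp
  have ck: "c * (real k - 4) = real k" unfolding c_def using k4 by simp
  have c0: "c \<ge> 0" unfolding c_def using k4 by simp
  have fk: "2 powr L = real (fact k)" unfolding L_def by simp
  have P: "real (Q (Suc m) k) \<le> 2 powr (L * (real k - 2) ^ m + c * ((real k - 2) ^ m - (real k / 2) ^ m))" for m
  proof (induction m)
    case 0
    show ?case using Q1[of k] fk by simp (metis of_nat_fact of_nat_le_iff)
  next
    case (Suc m)
    define e where "e = L * (real k - 2) ^ m + c * ((real k - 2) ^ m - (real k / 2) ^ m)"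
    have "real (Q (Suc (Suc m)) k) \<le> real (Q (Suc m) k) ^ (k-2) * 2 powr (real k ^ Suc m / 2 ^ Suc m)"
      using recursion[of k "Suc m"] assms(1) by simp
    also have "\<dots> \<le> (2 powr e) ^ (k-2) * 2 powr (real k ^ Suc m / 2 ^ Suc m)"
      using Suc.IH unfolding e_def by (intro mult_right_mono power_mono) simp_all
    also have "(2 powr e) ^ (k-2) = 2 powr (e * real (k-2))"
      by (simp add: powr_powr[symmetric] powr_realpow)
    also have "2 powr (e * real (k-2)) * 2 powr (real k ^ Suc m / 2 ^ Suc m)
       = 2 powr (e * real (k-2) + (real k / 2) ^ Suc m)"
      by (simp add: powr_add power_divide)
    also have "e * real (k-2) + (real k / 2) ^ Suc m =
      L * (real k - 2) ^ Suc m + c * ((real k - 2) ^ Suc m - (real k / 2) ^ Suc m)"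
    proof -
      have kk: "real (k-2) = real k - 2" using assms(1) by simp
      have "c * (real k - 2) * (real k / 2) ^ m - (real k / 2) * (real k / 2) ^ m
            = c * (real k / 2) * (real k / 2) ^ m"
      proof -
        have "c * (real k - 2) - real k / 2 = c * (real k / 2)" using ck by (simp add: algebra_simps)
        then show ?thesis by (metis left_diff_distrib)
      qed
      then show ?thesis unfolding e_def kk by (simp add: algebra_simps)
    qed
    finally show ?case .
  qed
  obtain m where m: "n = Suc m" using assms(2) by (cases n) auto
  have "real (Q n k) \<le> 2 powr (L * (real k - 2) ^ m + c * ((real k - 2) ^ m - (real k / 2) ^ m))"
    using P m by simp
  also have "\<dots> \<le> 2 powr ((L / (real k - 2) + c) * (real k - 2) ^ n)"
  proof (intro powr_mono)
    have k2: "real k - 2 > 0" using k4 by simp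
    have e1: "(L / (real k - 2) + c) * (real k - 2) ^ n = L * (real k - 2) ^ m + c * (real k - 2) ^ n"
      using k2 m by (simp add: field_simps)
    have "(real k - 2) ^ m \<le> (real k - 2) ^ n" using k4 m by simp
    moreover have "(real k / 2) ^ m \<ge> 0" by simp
    ultimately have "(real k - 2) ^ m - (real k / 2) ^ m \<le> (real k - 2) ^ n" by linarith
    then have "c * ((real k - 2) ^ m - (real k / 2) ^ m) \<le> c * (real k - 2) ^ n"
      using c0 by (rule mult_left_mono)
    then show "L * (real k - 2) ^ m + c * ((real k - 2) ^ m - (real k / 2) ^ m)
        \<le> (L / (real k - 2) + c) * (real k - 2) ^ n"
      unfolding e1 by linarith
  qed simp
  finally show ?thesis unfolding L_def c_def .
qed


end
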